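(* Let $\Gamma$ be a countable discrete group and $\mu$ a probability measure on $\Gamma$. Let $\eta\in\mathbb T$ and let $0\neq T\in\mathcal B(\ell^2(\Gamma))$ satisfy $\mathcal P_\mu(T)=\eta T$. Then there exists a nonzero $f\in\ell^\infty(\Gamma)$ with $f*\mu=\eta f$. In particular, if $\mu$ is symmetric and generating, then $-1$ is an eigenvalue of $\mathcal P_\mu$ on $\mathcal B(\ell^2(\Gamma))$ if and only if there exists a nonzero $f\in\ell^\infty(\Gamma)$ with $f*\mu=-f$.
   Context: $\rho$ denotes the right regular representation of $\Gamma$ on $\ell^2(\Gamma)$, $\rho_g\delta_x=\delta_{xg^{-1}}$. The Markov operator $\mathcal P_\mu:\mathcal B(\ell^2(\Gamma))\to\mathcal B(\ell^2(\Gamma))$ is $\mathcal P_\mu(T)=\sum_{g\in\Gamma}\mu(g)\rho_gT\rho_g^*$. For $f\in\ell^\infty(\Gamma)$, $(f*\mu)(g)=\sum_{h\in\Gamma}\mu(h)f(gh)$; identifying $f$ with the multiplication operator $M_f$, one has $\mathcal P_\mu(M_f)=M_{f*\mu}$. A measure $\mu$ is symmetric if $\mu(g)=\mu(g^{-1})$ for all $g$, and generating if its support generates $\Gamma$ as a group. *)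

theory Defs
  imports "HOL-Analysis.Analysis" "HOL-Library.Countable"
begin

text \<open>The group \<Gamma> is a type of class group_add (possibly non-commutative), written
additively: the product g h is g + h, the inverse g^-1 is - g, the unit is 0.
Vectors of l2(\<Gamma>) and elements of l-infinity(\<Gamma>) are functions \<Gamma> \<Rightarrow> complex.\<close>

definition l2 :: "('g \<Rightarrow> complex) set" where
  "l2 = {\<xi>. (\<lambda>x. (cmod (\<xi> x))\<^sup>2) summable_on UNIV}"

definition l2norm :: "('g \<Rightarrow> complex) \<Rightarrow> real" where
  "l2norm \<xi> = sqrt (\<Sum>\<^sub>\<infinity>x. (cmod (\<xi> x))\<^sup>2)"

definition linfty :: "('g \<Rightarrow> complex) set" where
  "linfty = {f. \<exists>B. \<forall>x. cmod (f x) \<le> B}"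

text \<open>Bounded linear operators on l2(\<Gamma>), represented by maps defined on l2 (values off l2 are irrelevant).\<close>
definition bounded_op :: "(('g \<Rightarrow> complex) \<Rightarrow> ('g \<Rightarrow> complex)) \<Rightarrow> bool" where
  "bounded_op T \<longleftrightarrow>
     (\<forall>\<xi>\<in>l2. T \<xi> \<in> l2) \<and>
     (\<forall>\<xi>\<in>l2. \<forall>\<zeta>\<in>l2. \<forall>a b. T (\<lambda>x. a * \<xi> x + b * \<zeta> x) = (\<lambda>x. a * T \<xi> x + b * T \<zeta> x)) \<and>
     (\<exists>C. \<forall>\<xi>\<in>l2. l2norm (T \<xi>) \<le> C * l2norm \<xi>)"

text \<open>Right regular representation: rho_g delta_y = delta_(y g^-1), i.e. (rho_g \<xi>)(x) = \<xi>(x g).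
Its adjoint rho_g^* is rho_(g^-1) (rho is unitary).\<close>
definition rho :: "'g::group_add \<Rightarrow> ('g \<Rightarrow> complex) \<Rightarrow> ('g \<Rightarrow> complex)" where
  "rho g \<xi> = (\<lambda>x. \<xi> (x + g))"

text \<open>Markov operator P_mu(T) = sum_g mu(g) rho_g T rho_g^*. The series converges absolutely in
operator norm; its value applied to \<xi> is computed coordinatewise.\<close>
definition markov_op :: "('g::group_add \<Rightarrow> real) \<Rightarrow> (('g \<Rightarrow> complex) \<Rightarrow> ('g \<Rightarrow> complex))
    \<Rightarrow> ('g \<Rightarrow> complex) \<Rightarrow> ('g \<Rightarrow> complex)" where
  "markov_op \<mu> T \<xi> = (\<lambda>x. \<Sum>\<^sub>\<infinity>g. complex_of_real (\<mu> g) * rho g (T (rho (- g) \<xi>)) x)"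

definition conv_mu :: "('g::group_add \<Rightarrow> complex) \<Rightarrow> ('g \<Rightarrow> real) \<Rightarrow> ('g \<Rightarrow> complex)" where
  "conv_mu f \<mu> = (\<lambda>g. \<Sum>\<^sub>\<infinity>h. complex_of_real (\<mu> h) * f (g + h))"

definition prob_on :: "('g \<Rightarrow> real) \<Rightarrow> bool" where
  "prob_on \<mu> \<longleftrightarrow> (\<forall>g. \<mu> g \<ge> 0) \<and> (\<mu> has_sum 1) UNIV"

definition symmetric_measure :: "('g::group_add \<Rightarrow> real) \<Rightarrow> bool" where
  "symmetric_measure \<mu> \<longleftrightarrow> (\<forall>g. \<mu> g = \<mu> (- g))"

inductive_set gen_subgroup :: "'g::group_add set \<Rightarrow> 'g set" for S where
  gen_zero: "0 \<in> gen_subgroup S"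
| gen_base: "s \<in> S \<Longrightarrow> s \<in> gen_subgroup S"
| gen_add: "a \<in> gen_subgroup S \<Longrightarrow> b \<in> gen_subgroup S \<Longrightarrow> a + b \<in> gen_subgroup S"
| gen_minus: "a \<in> gen_subgroup S \<Longrightarrow> - a \<in> gen_subgroup S"

definition generating :: "('g::group_add \<Rightarrow> real) \<Rightarrow> bool" where
  "generating \<mu> \<longleftrightarrow> gen_subgroup {g. \<mu> g \<noteq> 0} = UNIV"

definition markov_eigenvalue :: "('g::group_add \<Rightarrow> real) \<Rightarrow> complex \<Rightarrow> bool" where
  "markov_eigenvalue \<mu> \<eta> \<longleftrightarrow>
     (\<exists>T. bounded_op T \<and> (\<exists>\<xi>\<in>l2. T \<xi> \<noteq> (\<lambda>_. 0)) \<and>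
          (\<forall>\<xi>\<in>l2. markov_op \<mu> T \<xi> = (\<lambda>x. \<eta> * T \<xi> x)))"

end

theory Submission
  imports Defs
begin

definition dlt :: "'g \<Rightarrow> 'g \<Rightarrow> complex" where "dlt z = (\<lambda>y. if y = z then 1 else 0)"

lemma l2norm_nonneg: "l2norm \<xi> \<ge> 0"
  unfolding l2norm_def by (simp add: infsum_nonneg)

lemma l2_comp:
  assumes "\<xi> \<in> l2" "\<And>x. cmod (\<zeta> x) \<le> B * cmod (\<xi> x)"
  shows "\<zeta> \<in> l2 \<and> l2norm \<zeta> \<le> \<bar>B\<bar> * l2norm \<xi>"
proof -
  let ?g = "\<lambda>x. (cmod (\<xi> x))\<^sup>2" and ?h = "\<lambda>x. (cmod (\<zeta> x))\<^sup>2"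
  have gs: "?g summable_on UNIV" using assms(1) by (simp add: l2_def)
  have hle: "?h x \<le> B\<^sup>2 * ?g x" for x
  proof -
    have "?h x \<le> (B * cmod (\<xi> x))\<^sup>2" by (rule power_mono[OF assms(2)]) simp
    thus ?thesis by (simp add: power_mult_distrib)
  qed
  have bgs: "(\<lambda>x. B\<^sup>2 * ?g x) summable_on UNIV" using gs by (rule summable_on_cmult_right)
  have "Infinite_Sum.abs_summable_on ?h UNIV"
  proof (rule Infinite_Sum.abs_summable_on_comparison_test)
    show "Infinite_Sum.abs_summable_on (\<lambda>x. B\<^sup>2 * ?g x) UNIV"
      by (rule summable_on_iff_abs_summable_on_real[THEN iffD1, OF bgs])
    show "norm (?h x) \<le> norm (B\<^sup>2 * ?g x)" for x
    proof -
      have a: "\<bar>?h x\<bar> = ?h x" by (rule abs_of_nonneg) simp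
      have b: "\<bar>B\<^sup>2 * ?g x\<bar> = B\<^sup>2 * ?g x" by (rule abs_of_nonneg) simp
      show ?thesis unfolding real_norm_def a b by (rule hle)
    qed
  qed
  hence hs: "?h summable_on UNIV" by (rule summable_on_iff_abs_summable_on_real[THEN iffD2])
  have "infsum ?h UNIV \<le> infsum (\<lambda>x. B\<^sup>2 * ?g x) UNIV"
    by (rule infsum_mono[OF hs bgs hle])
  also have "\<dots> = B\<^sup>2 * infsum ?g UNIV" by (rule infsum_cmult_right')
  finally have "sqrt (infsum ?h UNIV) \<le> sqrt (B\<^sup>2 * infsum ?g UNIV)" by simp
  also have "\<dots> = \<bar>B\<bar> * sqrt (infsum ?g UNIV)" by (simp add: real_sqrt_mult)
  finally show ?thesis using hs by (simp add: l2_def l2norm_def)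
qed

lemma l2_point:
  assumes "\<xi> \<in> l2" shows "cmod (\<xi> x) \<le> l2norm \<xi>"
proof -
  have gs: "(\<lambda>x. (cmod (\<xi> x))\<^sup>2) summable_on UNIV" using assms by (simp add: l2_def)
  have "sum (\<lambda>x. (cmod (\<xi> x))\<^sup>2) {x} \<le> infsum (\<lambda>x. (cmod (\<xi> x))\<^sup>2) UNIV"
    by (rule finite_sum_le_infsum[OF gs]) auto
  thus ?thesis unfolding l2norm_def by (simp add: real_le_rsqrt)
qed

lemma dlt_l2: "dlt z \<in> l2 \<and> l2norm (dlt z) = 1"
proof -
  have e: "(\<lambda>x. (cmod (dlt z x))\<^sup>2) = (\<lambda>x. if x = z then 1 else 0)"
    by (auto simp: dlt_def)
  have s: "(\<lambda>x. if x = z then (1::real) else 0) summable_on UNIV"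
    by (rule summable_on_cong_neutral[where S="{z}" and f="\<lambda>x. if x = z then (1::real) else 0", THEN iffD1]) auto
  have i: "infsum (\<lambda>x. if x = z then (1::real) else 0) UNIV = infsum (\<lambda>x. if x = z then (1::real) else 0) {z}"
    by (rule infsum_cong_neutral) auto
  show ?thesis using s i by (simp add: l2_def l2norm_def e)
qed

lemma zero_l2: "(\<lambda>x. 0) \<in> l2"
  by (simp add: l2_def)

lemma density:
  assumes "\<xi> \<in> l2" "\<epsilon> > 0"
  shows "\<exists>F. finite F \<and> l2norm (\<lambda>x. if x \<in> F then 0 else \<xi> x) < \<epsilon>"
proof -
  let ?g = "\<lambda>x. (cmod (\<xi> x))\<^sup>2"
  have gs: "?g summable_on UNIV" using assms(1) by (simp add: l2_def)
  have "\<epsilon>\<^sup>2 / 2 > 0" using assms by simp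
  then obtain F where F: "finite F" "dist (sum ?g F) (infsum ?g UNIV) \<le> \<epsilon>\<^sup>2 / 2"
    using infsum_finite_approximation[OF gs] by blast
  define r where "r = (\<lambda>x. if x \<in> F then ?g x else 0)"
  define t where "t = (\<lambda>x. if x \<in> F then 0 else ?g x)"
  have rs: "r summable_on UNIV"
    by (rule summable_on_cong_neutral[where S=F and f=r, THEN iffD1]) (auto simp: r_def F)
  have ri: "infsum r UNIV = infsum r F"
    by (rule infsum_cong_neutral) (auto simp: r_def)
  also have "\<dots> = sum ?g F" using F(1) by (simp add: r_def)
  finally have ri: "infsum r UNIV = sum ?g F" .
  have tl: "(\<lambda>x. if x \<in> F then 0 else \<xi> x) \<in> l2 \<and>
      l2norm (\<lambda>x. if x \<in> F then 0 else \<xi> x) \<le> \<bar>1\<bar> * l2norm \<xi>"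
    by (rule l2_comp[OF assms(1)]) auto
  have te: "(\<lambda>x. (cmod (if x \<in> F then 0 else \<xi> x))\<^sup>2) = t"
    by (auto simp: t_def)
  have ts: "t summable_on UNIV" using tl te by (simp add: l2_def)
  have "infsum ?g UNIV = infsum (\<lambda>x. r x + t x) UNIV"
    by (rule infsum_cong) (simp add: r_def t_def)
  also have "\<dots> = infsum r UNIV + infsum t UNIV" by (rule infsum_add[OF rs ts])
  finally have "infsum t UNIV = infsum ?g UNIV - sum ?g F" using ri by simp
  hence "infsum t UNIV \<le> \<epsilon>\<^sup>2 / 2" using F(2) unfolding dist_real_def abs_le_iff by linarith
  moreover have "\<epsilon>\<^sup>2 > 0" using assms(2) by simp
  ultimately have "infsum t UNIV < \<epsilon>\<^sup>2" by linarith
  hence "sqrt (infsum t UNIV) < sqrt (\<epsilon>\<^sup>2)" by (simp only: real_sqrt_less_iff)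
  hence "sqrt (infsum t UNIV) < \<epsilon>" using assms(2) by simp
  thus ?thesis using F(1) te unfolding l2norm_def by auto
qed

lemma bop_lin:
  assumes "bounded_op T" "\<xi> \<in> l2" "\<zeta> \<in> l2"
  shows "T (\<lambda>x. a * \<xi> x + b * \<zeta> x) = (\<lambda>x. a * T \<xi> x + b * T \<zeta> x)"
  using assms unfolding bounded_op_def by blast

lemma bop_l2: "bounded_op T \<Longrightarrow> \<xi> \<in> l2 \<Longrightarrow> T \<xi> \<in> l2"
  unfolding bounded_op_def by blast

lemma finite_zero:
  assumes "bounded_op T" "\<And>z. T (dlt z) = (\<lambda>_. 0)" "\<xi> \<in> l2" "finite F"
  shows "T (\<lambda>x. if x \<in> F then \<xi> x else 0) = (\<lambda>_. 0)"
  using assms(4)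
proof (induction F rule: finite_induct)
  case empty
  have "T (\<lambda>x. 0 * (0::complex) + 0 * 0) = (\<lambda>x. 0 * T (\<lambda>x. 0) x + 0 * T (\<lambda>x. 0) x)"
    by (rule bop_lin[OF assms(1) zero_l2 zero_l2])
  thus ?case by simp
next
  case (insert z F)
  have l: "(\<lambda>x. if x \<in> F then \<xi> x else 0) \<in> l2"
    using l2_comp[OF assms(3), of "\<lambda>x. if x \<in> F then \<xi> x else 0" 1] by auto
  have e: "(\<lambda>x. if x \<in> insert z F then \<xi> x else 0)
      = (\<lambda>x. 1 * (if x \<in> F then \<xi> x else 0) + \<xi> z * dlt z x)"
    using insert(2) by (auto simp: dlt_def)
  show ?case unfolding e bop_lin[OF assms(1) l dlt_l2[THEN conjunct1]] insert(3) assms(2)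
    by simp
qed

lemma nonzero_entry:
  assumes T: "bounded_op T" and xi: "\<xi> \<in> l2" and nz: "T \<xi> \<noteq> (\<lambda>_. 0)"
  shows "\<exists>z. T (dlt z) \<noteq> (\<lambda>_. 0)"
proof (rule ccontr)
  assume "\<not> ?thesis"
  hence Z: "\<And>z. T (dlt z) = (\<lambda>_. 0)" by blast
  obtain x where x: "T \<xi> x \<noteq> 0" using nz by auto
  obtain C where C: "\<And>\<zeta>. \<zeta> \<in> l2 \<Longrightarrow> l2norm (T \<zeta>) \<le> C * l2norm \<zeta>"
    using T unfolding bounded_op_def by blast
  define c where "c = cmod (T \<xi> x)"
  have c0: "c > 0" using x by (simp add: c_def)
  define \<epsilon> where "\<epsilon> = c / (\<bar>C\<bar> + 1)"
  have e0: "\<epsilon> > 0" using c0 by (simp add: \<epsilon>_def)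
  obtain F where F: "finite F" "l2norm (\<lambda>x. if x \<in> F then 0 else \<xi> x) < \<epsilon>"
    using density[OF xi e0] by blast
  define a where "a = (\<lambda>x. if x \<in> F then \<xi> x else 0)"
  define b where "b = (\<lambda>x. if x \<in> F then 0 else \<xi> x)"
  have al: "a \<in> l2" using l2_comp[OF xi, of a 1] by (auto simp: a_def)
  have bl: "b \<in> l2" using l2_comp[OF xi, of b 1] by (auto simp: b_def)
  have "\<xi> = (\<lambda>x. 1 * a x + 1 * b x)" by (auto simp: a_def b_def)
  hence "T \<xi> = (\<lambda>x. 1 * T a x + 1 * T b x)" using bop_lin[OF T al bl] by metis
  moreover have "T a = (\<lambda>_. 0)" unfolding a_def by (rule finite_zero[OF T Z xi F(1)])
  ultimately have "T \<xi> = T b" by auto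
  hence "c = cmod (T b x)" by (simp add: c_def)
  also have "\<dots> \<le> l2norm (T b)" by (rule l2_point[OF bop_l2[OF T bl]])
  also have "\<dots> \<le> C * l2norm b" by (rule C[OF bl])
  also have "\<dots> \<le> \<bar>C\<bar> * l2norm b" using l2norm_nonneg[of b]
    by (simp add: mult_right_mono)
  also have "\<dots> \<le> \<bar>C\<bar> * \<epsilon>" using F(2) unfolding b_def[symmetric]
    by (simp add: mult_left_mono)
  also have "\<dots> < c" using c0 unfolding \<epsilon>_def
    by (simp add: field_simps)
  finally show False by simp
qed

lemma rho_dlt: "rho (- g) (dlt z) = dlt (z + g)"
  by (auto simp: rho_def dlt_def fun_eq_iff diff_conv_add_uminus[symmetric] diff_eq_eq)

lemma part1:
  fixes \<mu> :: "'g::group_add \<Rightarrow> real"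
  assumes T: "bounded_op T" and nz: "\<exists>\<xi>\<in>l2. T \<xi> \<noteq> (\<lambda>_. 0)"
    and M: "\<forall>\<xi>\<in>l2. markov_op \<mu> T \<xi> = (\<lambda>x. \<eta> * T \<xi> x)"
  shows "\<exists>f\<in>linfty. f \<noteq> (\<lambda>_. 0) \<and> conv_mu f \<mu> = (\<lambda>x. \<eta> * f x)"
proof -
  obtain z where z: "T (dlt z) \<noteq> (\<lambda>_. 0)" using nonzero_entry[OF T] nz by blast
  then obtain x where x: "T (dlt z) x \<noteq> 0" by auto
  obtain C where C: "\<And>\<zeta>. \<zeta> \<in> l2 \<Longrightarrow> l2norm (T \<zeta>) \<le> C * l2norm \<zeta>"
    using T unfolding bounded_op_def by blast
  define a where "a = z - x"
  define f where "f = (\<lambda>w. T (dlt (a + w)) w)"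
  have "f x \<noteq> 0" using x by (simp add: f_def a_def)
  hence "f \<noteq> (\<lambda>_. 0)" by auto
  moreover have "f \<in> linfty"
  proof -
    have "cmod (f w) \<le> C" for w
    proof -
      have "cmod (f w) \<le> l2norm (T (dlt (a + w)))"
        unfolding f_def by (rule l2_point[OF bop_l2[OF T dlt_l2[THEN conjunct1]]])
      also have "\<dots> \<le> C * l2norm (dlt (a + w))" by (rule C) (rule dlt_l2[THEN conjunct1])
      also have "\<dots> = C" using dlt_l2[of "a + w"] by simp
      finally show ?thesis .
    qed
    thus ?thesis by (auto simp: linfty_def)
  qed
  moreover have "conv_mu f \<mu> = (\<lambda>x. \<eta> * f x)"
  proof
    fix y
    have "markov_op \<mu> T (dlt (a + y)) y = \<eta> * T (dlt (a + y)) y"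
      using M dlt_l2 by metis
    moreover have "markov_op \<mu> T (dlt (a + y)) y = conv_mu f \<mu> y"
      by (simp add: markov_op_def conv_mu_def rho_dlt f_def add.assoc) (simp add: rho_def add.assoc)
    ultimately show "conv_mu f \<mu> y = \<eta> * f y" by (simp add: f_def)
  qed
  ultimately show ?thesis by blast
qed

lemma mult_op:
  fixes \<mu> :: "'g::group_add \<Rightarrow> real"
  assumes f: "f \<in> linfty" "f \<noteq> (\<lambda>_. 0)" and cf: "conv_mu f \<mu> = (\<lambda>x. - f x)"
  shows "markov_eigenvalue \<mu> (-1)"
proof -
  obtain B where B: "\<And>x. cmod (f x) \<le> B" using f(1) by (auto simp: linfty_def)
  define T where "T = (\<lambda>\<xi>::'g \<Rightarrow> complex. \<lambda>x. f x * \<xi> x)"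
  have cm: "cmod (T \<xi> x) \<le> B * cmod (\<xi> x)" for \<xi> x
    unfolding T_def by (simp add: norm_mult mult_right_mono B)
  have bo: "bounded_op T"
    unfolding bounded_op_def
  proof (intro conjI)
    show "\<forall>\<xi>\<in>l2. T \<xi> \<in> l2" using l2_comp cm by blast
    show "\<forall>\<xi>\<in>l2. \<forall>\<zeta>\<in>l2. \<forall>a b. T (\<lambda>x. a * \<xi> x + b * \<zeta> x) = (\<lambda>x. a * T \<xi> x + b * T \<zeta> x)"
      by (auto simp: T_def algebra_simps)
    show "\<exists>C. \<forall>\<xi>\<in>l2. l2norm (T \<xi>) \<le> C * l2norm \<xi>" using l2_comp cm by blast
  qed
  obtain x where x: "f x \<noteq> 0" using f(2) by auto
  have "T (dlt x) x \<noteq> 0" using x by (simp add: T_def dlt_def)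
  hence nz: "\<exists>\<xi>\<in>l2. T \<xi> \<noteq> (\<lambda>_. 0)" using dlt_l2 by (metis)
  have "\<forall>\<xi>\<in>l2. markov_op \<mu> T \<xi> = (\<lambda>x. - 1 * T \<xi> x)"
  proof (intro ballI ext)
    fix \<xi> :: "'g \<Rightarrow> complex" and y
    have "markov_op \<mu> T \<xi> y = (\<Sum>\<^sub>\<infinity>g. complex_of_real (\<mu> g) * f (y + g) * \<xi> y)"
      by (simp add: markov_op_def T_def rho_def add.assoc mult.assoc)
    also have "\<dots> = conv_mu f \<mu> y * \<xi> y"
      unfolding conv_mu_def by (rule infsum_cmult_left')
    finally show "markov_op \<mu> T \<xi> y = - 1 * T \<xi> y" using cf by (simp add: T_def)
  qed
  thus ?thesis unfolding markov_eigenvalue_def using bo nz by blast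
qed

theorem proposition2p1:
  fixes \<mu> :: "'g::{group_add, countable} \<Rightarrow> real"
    and \<eta> :: complex
    and T :: "('g \<Rightarrow> complex) \<Rightarrow> ('g \<Rightarrow> complex)"
  assumes "prob_on \<mu>"
  shows "((cmod \<eta> = 1 \<and> bounded_op T \<and> (\<exists>\<xi>\<in>l2. T \<xi> \<noteq> (\<lambda>_. 0)) \<and>
           (\<forall>\<xi>\<in>l2. markov_op \<mu> T \<xi> = (\<lambda>x. \<eta> * T \<xi> x)))
         \<longrightarrow> (\<exists>f\<in>linfty. f \<noteq> (\<lambda>_. 0) \<and> conv_mu f \<mu> = (\<lambda>x. \<eta> * f x)))
         \<and> (symmetric_measure \<mu> \<and> generating \<mu> \<longrightarrow>
          (markov_eigenvalue \<mu> (-1) \<longleftrightarrow>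
           (\<exists>f\<in>linfty. f \<noteq> (\<lambda>_. 0) \<and> conv_mu f \<mu> = (\<lambda>x. - f x))))"
proof (intro conjI impI iffI)
  show "\<exists>f\<in>linfty. f \<noteq> (\<lambda>_. 0) \<and> conv_mu f \<mu> = (\<lambda>x. \<eta> * f x)"
    if "cmod \<eta> = 1 \<and> bounded_op T \<and> (\<exists>\<xi>\<in>l2. T \<xi> \<noteq> (\<lambda>_. 0)) \<and>
           (\<forall>\<xi>\<in>l2. markov_op \<mu> T \<xi> = (\<lambda>x. \<eta> * T \<xi> x))"
    using part1 that by blast
next
  assume "markov_eigenvalue \<mu> (-1)"
  then obtain S where "bounded_op S" "\<exists>\<xi>\<in>l2. S \<xi> \<noteq> (\<lambda>_. 0)"
      "\<forall>\<xi>\<in>l2. markov_op \<mu> S \<xi> = (\<lambda>x. -1 * S \<xi> x)"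
    unfolding markov_eigenvalue_def by blast
  from part1[OF this] show "\<exists>f\<in>linfty. f \<noteq> (\<lambda>_. 0) \<and> conv_mu f \<mu> = (\<lambda>x. - f x)"
    by simp
next
  assume "\<exists>f\<in>linfty. f \<noteq> (\<lambda>_. 0) \<and> conv_mu f \<mu> = (\<lambda>x. - f x)"
  thus "markov_eigenvalue \<mu> (-1)" using mult_op by blast
qed

end
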